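(* Let $p>0$, $e\ge 0$ and $\omega\in\mathbb{R}$, and let $\hat{\mathbf p}=(\cos\omega,\sin\omega)$. Let $\mathbf x_1,\mathbf x_2,\mathbf x_3\in\mathbb{R}^2$ be three distinct points of the form $\mathbf x_i=(x_i,y_i)=r_i(\cos\varphi_i,\sin\varphi_i)$ with $1+e\cos(\varphi_i-\omega)>0$ and $$r_i=\frac{p}{1+e\cos(\varphi_i-\omega)}\qquad(i=1,2,3),$$ so that $r_i=\sqrt{x_i^2+y_i^2}>0$ (i.e. the three points lie on the single branch, given by this polar equation, of a conic with a focus at the origin, semi-latus rectum $p$, eccentricity $e$ and periapsis direction $\hat{\mathbf p}$). Define $$\mathbf u_{123}=(r_1+r_2)\begin{bmatrix} r_2x_1-r_1x_2\\ r_2y_1-r_1y_2\\ r_1-r_2\end{bmatrix},\qquad \mathbf v_{123}=(r_1+r_3)\begin{bmatrix} r_3x_1-r_1x_3\\ r_3y_1-r_1y_3\\ r_1-r_3\end{bmatrix},$$ and $\mathbf s=(s_1,s_2,s_3)=\mathbf u_{123}\times\mathbf v_{123}$. Then $s_3\neq 0$, and setting $X=s_1/s_3$, $Y=s_2/s_3$ and $$Z^2=\frac{1}{r_1^2}\Big(1-2Xx_1-2Yy_1-Y^2x_1^2+2XYx_1y_1-X^2y_1^2\Big)$$ (equivalently $Z^2=r_1^{-2}\,\bar{\mathbf x}_1^T M\bar{\mathbf x}_1$ with $\bar{\mathbf x}_1=[x_1;y_1;1]$ and $M=\begin{bmatrix}-Y^2&XY&-X\\ XY&-X^2&-Y\\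 -X&-Y&1\end{bmatrix}$), one has $X^2+Y^2+Z^2>0$, $$p=\frac{1}{\sqrt{X^2+Y^2+Z^2}},\qquad e=\sqrt{\frac{X^2+Y^2}{X^2+Y^2+Z^2}},$$ and, if $e>0$, $\hat{\mathbf p}=(X,Y)/\sqrt{X^2+Y^2}$. Moreover, the three points lie on the conic $\{(x,y): [x;y;1]^T C[x;y;1]=0\}$ with $C=\begin{bmatrix}-(Y^2+Z^2)&XY&-X\\ XY&-(X^2+Z^2)&-Y\\ -X&-Y&1\end{bmatrix}$.
   Context: Points of $\mathbb{R}^2$ are identified with homogeneous coordinates $[x;y;1]$ in the projective plane. The cross product $\times$ is the usual cross product in $\mathbb{R}^3$. The polar equation $r=p/(1+e\cos\theta)$, with $\theta$ the angle from the periapsis direction $\hat{\mathbf p}$, describes a Keplerian orbit (ellipse, parabola, or one branch of a hyperbola) with focus at the origin. *)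

theory Defs
  imports "HOL-Analysis.Analysis"
begin

definition cross3 :: "real \<times> real \<times> real \<Rightarrow> real \<times> real \<times> real \<Rightarrow> real \<times> real \<times> real" where
  "cross3 a b = (case a of (a1,a2,a3) \<Rightarrow> case b of (b1,b2,b3) \<Rightarrow>
     (a2*b3 - a3*b2, a3*b1 - a1*b3, a1*b2 - a2*b1))"

definition conic_form :: "(real \<times> real \<times> real) \<times> (real \<times> real \<times> real) \<times> (real \<times> real \<times> real) \<Rightarrow> real \<Rightarrow> real \<Rightarrow> real" where
  "conic_form C x y = (case C of ((c11,c12,c13),(c21,c22,c23),(c31,c32,c33)) \<Rightarrow>
     x*(c11*x + c12*y + c13) + y*(c21*x + c22*y + c23) + (c31*x + c32*y + c33))"

end

theory Submission
  imports Defs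
begin

lemma noncol:
  fixes x1 y1 x2 y2 x3 y3 r1 r2 r3 p a b :: real
  assumes p: "p > 0" and r1: "r1 > 0"
    and c1: "x1^2+y1^2 = r1^2" and c2: "x2^2+y2^2 = r2^2" and c3: "x3^2+y3^2 = r3^2"
    and l1: "r1 + a*x1 + b*y1 = p" and l2: "r2 + a*x2 + b*y2 = p" and l3: "r3 + a*x3 + b*y3 = p"
    and d12: "(x1,y1) \<noteq> (x2,y2)" and d13: "(x1,y1) \<noteq> (x3,y3)" and d23: "(x2,y2) \<noteq> (x3,y3)"
  shows "(x2-x1)*(y3-y1) - (x3-x1)*(y2-y1) \<noteq> 0"
proof
  assume col: "(x2-x1)*(y3-y1) - (x3-x1)*(y2-y1) = 0"
  define d1 where "d1 = x2-x1"
  define d2 where "d2 = y2-y1"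
  define f1 where "f1 = x3-x1"
  define f2 where "f2 = y3-y1"
  define dL where "dL = r2 - r1"
  have dnz: "d1^2+d2^2 \<noteq> 0" using d12 unfolding d1_def d2_def by auto
  define t where "t = (f1*d1+f2*d2)/(d1^2+d2^2)"
  have colf: "f1*d2 = f2*d1" using col unfolding d1_def d2_def f1_def f2_def by (simp add: algebra_simps)
  have ft1: "f1 = t*d1"
  proof -
    have "f1*(d1^2+d2^2) = (f1*d1+f2*d2)*d1" using colf by (simp add: power2_eq_square algebra_simps)
    thus ?thesis unfolding t_def using dnz by (simp add: field_simps)
  qed
  have ft2: "f2 = t*d2"
  proof -
    have "f2*(d1^2+d2^2) = (f1*d1+f2*d2)*d2" using colf by (simp add: power2_eq_square algebra_simps)
    thus ?thesis unfolding t_def using dnz by (simp add: field_simps)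
  qed
  have t0: "t \<noteq> 0" using d13 ft1 ft2 unfolding f1_def f2_def by auto
  have t1: "t \<noteq> 1" using d23 ft1 ft2 unfolding f1_def f2_def d1_def d2_def by auto
  have dLe: "dL = -(a*d1+b*d2)" using l1 l2 unfolding dL_def d1_def d2_def by (simp add: algebra_simps)
  have dLt: "t*dL = -(a*(t*d1)+b*(t*d2))" unfolding dLe by (simp add: algebra_simps)
  have r3e: "r3 = r1 + t*dL" using l1 l3 ft1 ft2 unfolding dLt f1_def f2_def by (simp add: algebra_simps)
  define \<alpha> where "\<alpha> = d1^2+d2^2 - dL^2"
  define \<beta> where "\<beta> = 2*(x1*d1+y1*d2 - r1*dL)"
  have e1: "\<beta> + \<alpha> = 0"
  proof -
    have "(x1+d1)^2+(y1+d2)^2 = (r1+dL)^2" using c2 unfolding d1_def d2_def dL_def by simp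
    thus ?thesis using c1 unfolding \<alpha>_def \<beta>_def by (simp add: power2_eq_square algebra_simps)
  qed
  have e2: "t*(\<beta> + t*\<alpha>) = 0"
  proof -
    have "(x1+t*d1)^2+(y1+t*d2)^2 = (r1+t*dL)^2" proof -
      have "x3 = x1 + t*d1" "y3 = y1 + t*d2" using ft1 ft2 unfolding f1_def f2_def by simp_all
      thus ?thesis using c3 r3e by simp
    qed
    thus ?thesis using c1 unfolding \<alpha>_def \<beta>_def by (simp add: power2_eq_square algebra_simps)
  qed
  have "\<beta> + t*\<alpha> = 0" using e2 t0 by simp
  moreover have "\<alpha>*(t-1) = (\<beta> + t*\<alpha>) - (\<beta> + \<alpha>)" by (simp add: algebra_simps)
  ultimately have "\<alpha>*(t-1) = 0" using e1 by simp
  hence a0: "\<alpha> = 0" using t1 by simp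
  hence b0: "\<beta> = 0" using e1 by simp
  have dot: "x1*d1+y1*d2 = r1*dL" using b0 unfolding \<beta>_def by simp
  have nn: "d1^2+d2^2 = dL^2" using a0 unfolding \<alpha>_def by simp
  have "(x1*d2 - y1*d1)^2 = (x1^2+y1^2)*(d1^2+d2^2) - (x1*d1+y1*d2)^2"
    by (simp add: power2_eq_square algebra_simps)
  also have "\<dots> = 0" using c1 nn dot by (simp add: power2_eq_square algebra_simps)
  finally have cr: "x1*d2 = y1*d1" by simp
  have "d1*r1^2 = x1*(x1*d1+y1*d2)"
  proof -
    have "d1*r1^2 = d1*(x1^2+y1^2)" using c1 by simp
    also have "\<dots> = x1*(x1*d1+y1*d2)" using cr by (simp add: power2_eq_square algebra_simps)
    finally show ?thesis .
  qed
  also have "\<dots> = x1*(r1*dL)" using dot by simp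
  finally have "d1*r1*r1 = x1*dL*r1" by (simp add: power2_eq_square mult_ac)
  hence q1: "d1*r1 = x1*dL" using r1 by simp
  have "d2*r1^2 = y1*(x1*d1+y1*d2)"
  proof -
    have "d2*r1^2 = d2*(x1^2+y1^2)" using c1 by simp
    also have "\<dots> = y1*(x1*d1+y1*d2)" using cr by (simp add: power2_eq_square algebra_simps)
    finally show ?thesis .
  qed
  also have "\<dots> = y1*(r1*dL)" using dot by simp
  finally have "d2*r1*r1 = y1*dL*r1" by (simp add: power2_eq_square mult_ac)
  hence q2: "d2*r1 = y1*dL" using r1 by simp
  have "dL*r1 = -(a*(d1*r1)+b*(d2*r1))" unfolding dLe by (simp add: algebra_simps)
  also have "\<dots> = -dL*(a*x1+b*y1)" using q1 q2 by (simp add: algebra_simps)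
  also have "\<dots> = -dL*(p - r1)" using l1[symmetric] by (simp add: algebra_simps)
  finally have "dL*p = 0" by (simp add: algebra_simps)
  hence "dL = 0" using p by simp
  hence "d1 = 0" "d2 = 0" using q1 q2 r1 by auto
  thus False using dnz by simp
qed
lemma pt:
  fixes x y r a b p e Z2 :: real
  assumes "x^2+y^2 = r^2" "r + a*x + b*y = p" "p>0" "a^2+b^2 = e^2" "Z2 = (1-e^2)/p^2"
  shows "conic_form ((-((b/p)^2+Z2),(a/p)*(b/p),-(a/p)),((a/p)*(b/p),-((a/p)^2+Z2),-(b/p)),(-(a/p),-(b/p),1)) x y = 0"
proof -
  have "p^2 * conic_form ((-((b/p)^2+Z2),(a/p)*(b/p),-(a/p)),((a/p)*(b/p),-((a/p)^2+Z2),-(b/p)),(-(a/p),-(b/p),1)) x y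
     = -(b^2+(1-e^2))*x^2 + 2*a*b*x*y - 2*p*a*x - (a^2+(1-e^2))*y^2 - 2*p*b*y + p^2"
    using assms(3) unfolding conic_form_def assms(5) by (simp add: field_simps power2_eq_square)
  also have "\<dots> = 0" using assms(1,2,4) by algebra
  finally show ?thesis using assms(3) by simp
qed

lemma z2:
  fixes x y r a b p e :: real
  assumes "x^2+y^2 = r^2" "r + a*x + b*y = p" "p>0" "a^2+b^2 = e^2" "r > 0"
  shows "(1 / r^2) * (1 - 2*(a/p)*x - 2*(b/p)*y - (b/p)^2*x^2 + 2*(a/p)*(b/p)*x*y - (a/p)^2*y^2) = (1-e^2)/p^2"
proof -
  have "p^2 * (1 - 2*(a/p)*x - 2*(b/p)*y - (b/p)^2*x^2 + 2*(a/p)*(b/p)*x*y - (a/p)^2*y^2)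
      = p^2 - 2*p*a*x - 2*p*b*y - b^2*x^2 + 2*a*b*x*y - a^2*y^2"
    using assms(3) by (simp add: field_simps power2_eq_square)
  also have "\<dots> = (1-e^2)*r^2" using assms(1,2,4) by algebra
  finally have "p^2 * (1 - 2*(a/p)*x - 2*(b/p)*y - (b/p)^2*x^2 + 2*(a/p)*(b/p)*x*y - (a/p)^2*y^2) = (1-e^2)*r^2" .
  thus ?thesis using assms(3,5) by (simp add: field_simps)
qed
lemma cross_facts:
  fixes x1 y1 x2 y2 x3 y3 r1 r2 r3 p a b :: real
  assumes p: "p > 0"
    and l1: "r1 + a*x1 + b*y1 = p" and l2: "r2 + a*x2 + b*y2 = p" and l3: "r3 + a*x3 + b*y3 = p"
    and u: "u = ((r1 + r2) * (r2 * x1 - r1 * x2), (r1 + r2) * (r2 * y1 - r1 * y2), (r1 + r2) * (r1 - r2))"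
    and v: "v = ((r1 + r3) * (r3 * x1 - r1 * x3), (r1 + r3) * (r3 * y1 - r1 * y3), (r1 + r3) * (r1 - r3))"
  shows "snd (snd (cross3 u v)) = (r1+r2)*(r1+r3)*r1*p*((x2-x1)*(y3-y1) - (x3-x1)*(y2-y1))"
    and "p * fst (cross3 u v) = a * snd (snd (cross3 u v))"
    and "p * fst (snd (cross3 u v)) = b * snd (snd (cross3 u v))"
proof -
  define U1 where "U1 = (r1 + r2) * (r2 * x1 - r1 * x2)"
  define U2 where "U2 = (r1 + r2) * (r2 * y1 - r1 * y2)"
  define U3 where "U3 = (r1 + r2) * (r1 - r2)"
  define V1 where "V1 = (r1 + r3) * (r3 * x1 - r1 * x3)"
  define V2 where "V2 = (r1 + r3) * (r3 * y1 - r1 * y3)"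
  define V3 where "V3 = (r1 + r3) * (r1 - r3)"
  have cr: "cross3 u v = (U2*V3 - U3*V2, U3*V1 - U1*V3, U1*V2 - U2*V1)"
    unfolding u v cross3_def U1_def U2_def U3_def V1_def V2_def V3_def by simp
  have hu: "p*U3 = -(a*U1+b*U2)"
  proof -
    have q1: "a*x1+b*y1 = p - r1" using l1 by simp
    have q2: "a*x2+b*y2 = p - r2" using l2 by simp
    have "a*U1+b*U2 = (r1+r2)*(r2*(a*x1+b*y1) - r1*(a*x2+b*y2))"
      unfolding U1_def U2_def by (simp add: algebra_simps)
    also have "\<dots> = (r1+r2)*(r2*(p-r1) - r1*(p-r2))" unfolding q1 q2 ..
    also have "\<dots> = -(p*U3)" unfolding U3_def by (simp add: algebra_simps)
    finally show ?thesis by simp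
  qed
  have hv: "p*V3 = -(a*V1+b*V2)"
  proof -
    have q1: "a*x1+b*y1 = p - r1" using l1 by simp
    have q2: "a*x3+b*y3 = p - r3" using l3 by simp
    have "a*V1+b*V2 = (r1+r3)*(r3*(a*x1+b*y1) - r1*(a*x3+b*y3))"
      unfolding V1_def V2_def by (simp add: algebra_simps)
    also have "\<dots> = (r1+r3)*(r3*(p-r1) - r1*(p-r3))" unfolding q1 q2 ..
    also have "\<dots> = -(p*V3)" unfolding V3_def by (simp add: algebra_simps)
    finally show ?thesis by simp
  qed
  show "snd (snd (cross3 u v)) = (r1+r2)*(r1+r3)*r1*p*((x2-x1)*(y3-y1) - (x3-x1)*(y2-y1))"
  proof -
    have r1e: "r1 = p - a*x1 - b*y1" and r2e: "r2 = p - a*x2 - b*y2" and r3e: "r3 = p - a*x3 - b*y3"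
      using l1 l2 l3 by simp_all
    have D: "r1*(x2*y3-x3*y2) + r2*(x3*y1-x1*y3) + r3*(x1*y2-x2*y1) = p*((x2-x1)*(y3-y1) - (x3-x1)*(y2-y1))"
      unfolding r1e r2e r3e by algebra
    have "snd (snd (cross3 u v)) = (r1+r2)*(r1+r3)*r1*(r1*(x2*y3-x3*y2) + r2*(x3*y1-x1*y3) + r3*(x1*y2-x2*y1))"
      unfolding cr U1_def U2_def V1_def V2_def by simp algebra
    thus ?thesis unfolding D by simp
  qed
  show "p * fst (cross3 u v) = a * snd (snd (cross3 u v))"
    unfolding cr using hu hv by simp algebra
  show "p * fst (snd (cross3 u v)) = b * snd (snd (cross3 u v))"
    unfolding cr using hu hv by simp algebra
qed
theorem mainTheorem1:
  fixes p e \<omega> :: real and x y r \<phi> :: "nat \<Rightarrow> real"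
  assumes hp: "p > 0" and he: "e \<ge> 0"
    and hpos: "\<And>i. i \<in> {1,2,3} \<Longrightarrow> 1 + e * cos (\<phi> i - \<omega>) > 0"
    and hr: "\<And>i. i \<in> {1,2,3} \<Longrightarrow> r i = p / (1 + e * cos (\<phi> i - \<omega>))"
    and hx: "\<And>i. i \<in> {1,2,3} \<Longrightarrow> x i = r i * cos (\<phi> i)"
    and hy: "\<And>i. i \<in> {1,2,3} \<Longrightarrow> y i = r i * sin (\<phi> i)"
    and hdist: "(x 1, y 1) \<noteq> (x 2, y 2)" "(x 1, y 1) \<noteq> (x 3, y 3)" "(x 2, y 2) \<noteq> (x 3, y 3)"
  defines "u \<equiv> ((r 1 + r 2) * (r 2 * x 1 - r 1 * x 2), (r 1 + r 2) * (r 2 * y 1 - r 1 * y 2),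
                 (r 1 + r 2) * (r 1 - r 2))"
    and "v \<equiv> ((r 1 + r 3) * (r 3 * x 1 - r 1 * x 3), (r 1 + r 3) * (r 3 * y 1 - r 1 * y 3),
                 (r 1 + r 3) * (r 1 - r 3))"
  shows "snd (snd (cross3 u v)) \<noteq> 0 \<and>
    (let s = cross3 u v; X = fst s / snd (snd s); Y = fst (snd s) / snd (snd s);
         Z2 = (1 / (r 1)^2) * (1 - 2*X*x 1 - 2*Y*y 1 - Y^2*(x 1)^2 + 2*X*Y*x 1*y 1 - X^2*(y 1)^2);
         C = ((-(Y^2 + Z2), X*Y, -X), (X*Y, -(X^2 + Z2), -Y), (-X, -Y, 1))
     in X^2 + Y^2 + Z2 > 0
        \<and> p = 1 / sqrt (X^2 + Y^2 + Z2)
        \<and> e = sqrt ((X^2 + Y^2) / (X^2 + Y^2 + Z2))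
        \<and> (e > 0 \<longrightarrow> (cos \<omega>, sin \<omega>) = (X / sqrt (X^2 + Y^2), Y / sqrt (X^2 + Y^2)))
        \<and> (\<forall>i\<in>{1,2,3}. conic_form C (x i) (y i) = 0))"
proof -
  define a where "a = e * cos \<omega>"
  define b where "b = e * sin \<omega>"
  have ab: "a^2+b^2 = e^2"
  proof -
    have "a^2+b^2 = e^2*((sin \<omega>)^2+(cos \<omega>)^2)" unfolding a_def b_def by (simp only: power_mult_distrib distrib_left add.commute)
    thus ?thesis by (simp only: sin_cos_squared_add mult_1_right)
  qed
  have rpos: "r i > 0" if "i \<in> {1,2,3}" for i using hr[OF that] hpos[OF that] hp by simp
  have circ: "x i ^2 + y i ^2 = r i ^2" if "i \<in> {1,2,3}" for i
  proof -
    have "x i ^2 + y i ^2 = r i ^2 * ((cos (\<phi> i))^2 + (sin (\<phi> i))^2)"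
      unfolding hx[OF that] hy[OF that] by (simp only: power_mult_distrib distrib_left )
    thus ?thesis by simp
  qed
  have lin: "r i + a * x i + b * y i = p" if "i \<in> {1,2,3}" for i
  proof -
    have "r i * (1 + e * cos (\<phi> i - \<omega>)) = p" using hr[OF that] hpos[OF that] by simp
    thus ?thesis unfolding hx[OF that] hy[OF that] a_def b_def cos_diff by (simp add: algebra_simps)
  qed
  have L1: "r 1 + a * x 1 + b * y 1 = p" and L2: "r 2 + a * x 2 + b * y 2 = p" and L3: "r 3 + a * x 3 + b * y 3 = p"
    using lin by simp_all
  have C1: "x 1 ^2 + y 1 ^2 = r 1 ^2" and C2: "x 2 ^2 + y 2 ^2 = r 2 ^2" and C3: "x 3 ^2 + y 3 ^2 = r 3 ^2"
    using circ by simp_all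
  have R1: "r 1 > 0" and R2: "r 2 > 0" and R3: "r 3 > 0" using rpos by simp_all
  note cf = cross_facts[OF hp L1 L2 L3 meta_eq_to_obj_eq[OF u_def] meta_eq_to_obj_eq[OF v_def]]
  have A: "(x 2 - x 1)*(y 3 - y 1) - (x 3 - x 1)*(y 2 - y 1) \<noteq> 0"
    using noncol[OF hp R1 C1 C2 C3 L1 L2 L3 hdist] by simp
  have s3: "snd (snd (cross3 u v)) \<noteq> 0"
    unfolding cf(1) using A hp R1 R2 R3 by simp
  have X: "fst (cross3 u v) / snd (snd (cross3 u v)) = a/p"
    using cf(2) s3 hp by (simp add: field_simps)
  have Y: "fst (snd (cross3 u v)) / snd (snd (cross3 u v)) = b/p"
    using cf(3) s3 hp by (simp add: field_simps)
  have Z: "(1 / (r 1)^2) * (1 - 2*(a/p)*x 1 - 2*(b/p)*y 1 - (b/p)^2*(x 1)^2 + 2*(a/p)*(b/p)*x 1*y 1 - (a/p)^2*(y 1)^2) = (1-e^2)/p^2"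
    using z2[OF C1 L1 hp ab R1] by simp
  have sum: "(a/p)^2 + (b/p)^2 + (1-e^2)/p^2 = 1/p^2"
    using ab hp by (simp add: field_simps power2_eq_square)
  have sab: "(a/p)^2 + (b/p)^2 = e^2/p^2" using ab hp by (simp add: field_simps power2_eq_square)
  have P: "p = 1 / sqrt (1/p^2)" using hp by (simp add: real_sqrt_divide)
  have E: "e = sqrt ((e^2/p^2) / (1/p^2))" using hp he by simp
  have D: "(cos \<omega>, sin \<omega>) = ((a/p) / sqrt (e^2/p^2), (b/p) / sqrt (e^2/p^2))" if "e > 0"
    using that hp unfolding a_def b_def by (simp add: real_sqrt_divide)
  have C: "\<forall>i\<in>{1,2,3}. conic_form ((-((b/p)^2+(1-e^2)/p^2),(a/p)*(b/p),-(a/p)),((a/p)*(b/p),-((a/p)^2+(1-e^2)/p^2),-(b/p)),(-(a/p),-(b/p),1)) (x i) (y i) = 0"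
    using pt[OF circ lin hp ab refl] by simp
  have pos: "1/p^2 > 0" using hp by simp
  show ?thesis
    unfolding Let_def X Y Z
    unfolding sum
    unfolding sab
    using s3 pos P E D C by blast
qed

end
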